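(* Let $\mu$ be a positive finite Borel measure on $[0,1)$ which is a Carleson measure but not a vanishing Carleson measure, and let $\gamma>0$. Then $I_\mu: H^\infty_{v_\gamma}\to H^\infty_{v_\gamma}$ is (well defined and) continuous if and only if $0<\gamma<1$. In this case, $I_\mu: H^\infty_{v_\gamma}\to H^\infty_{v_\gamma}$ is never compact.
   Context: $\mathbb{D}$ is the open unit disc, $H(\mathbb{D})$ the holomorphic functions on $\mathbb{D}$. For a positive finite Borel measure $\mu$ on $[0,1)$, $I_\mu(f)(z)=\int_0^1\frac{f(t)}{1-tz}\,d\mu(t)$ for $f\in H(\mathbb{D})$ whenever this defines a holomorphic function on $\mathbb{D}$. $v_\gamma(z)=(1-|z|)^\gamma$ and $H^\infty_{v_\gamma}=\{f\in H(\mathbb{D}):\sup_{z\in\mathbb{D}}(1-|z|)^\gamma|f(z)|<\infty\}$ with this supremum as norm. $\mu$ is a Carleson measure if $\mu([t,1))=O(1-t)$ as $t\to1^-$, and a vanishing Carleson measure if $\mu([t,1))=o(1-t)$ as $t\to1^-$. *)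

theory Defs
  imports "HOL-Analysis.Analysis" "HOL-Library.Landau_Symbols"
begin

definition Hv :: "real \<Rightarrow> (complex \<Rightarrow> complex) set" where
  "Hv \<gamma> = {f. f holomorphic_on ball 0 1 \<and>
      bdd_above ((\<lambda>z. (1 - norm z) powr \<gamma> * norm (f z)) ` ball 0 1)}"

definition normv :: "real \<Rightarrow> (complex \<Rightarrow> complex) \<Rightarrow> real" where
  "normv \<gamma> f = (SUP z\<in>ball 0 1. (1 - norm z) powr \<gamma> * norm (f z))"

definition Imu :: "real measure \<Rightarrow> (complex \<Rightarrow> complex) \<Rightarrow> complex \<Rightarrow> complex" where
  "Imu \<mu> f z = (\<integral>t. f (complex_of_real t) / (1 - complex_of_real t * z) \<partial>\<mu>)"

definition Imu_well_defined :: "real measure \<Rightarrow> real \<Rightarrow> bool" where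
  "Imu_well_defined \<mu> \<gamma> \<longleftrightarrow>
     (\<forall>f\<in>Hv \<gamma>. (\<forall>z\<in>ball 0 1. integrable \<mu> (\<lambda>t. f (complex_of_real t) / (1 - complex_of_real t * z)))
        \<and> Imu \<mu> f holomorphic_on ball 0 1 \<and> Imu \<mu> f \<in> Hv \<gamma>)"

definition Imu_continuous :: "real measure \<Rightarrow> real \<Rightarrow> bool" where
  "Imu_continuous \<mu> \<gamma> \<longleftrightarrow> Imu_well_defined \<mu> \<gamma> \<and>
     (\<forall>f\<in>Hv \<gamma>. \<forall>\<epsilon>>0. \<exists>\<delta>>0. \<forall>g\<in>Hv \<gamma>.
        normv \<gamma> (\<lambda>z. g z - f z) < \<delta> \<longrightarrow> normv \<gamma> (\<lambda>z. Imu \<mu> g z - Imu \<mu> f z) < \<epsilon>)"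

definition Imu_compact :: "real measure \<Rightarrow> real \<Rightarrow> bool" where
  "Imu_compact \<mu> \<gamma> \<longleftrightarrow> Imu_well_defined \<mu> \<gamma> \<and>
     (\<forall>F :: nat \<Rightarrow> complex \<Rightarrow> complex.
        (\<forall>n. F n \<in> Hv \<gamma>) \<and> (\<exists>B. \<forall>n. normv \<gamma> (F n) \<le> B) \<longrightarrow>
        (\<exists>r g. strict_mono r \<and> g \<in> Hv \<gamma> \<and>
           (\<lambda>n. normv \<gamma> (\<lambda>z. Imu \<mu> (F (r n)) z - g z)) \<longlonglongrightarrow> 0))"

definition carleson :: "real measure \<Rightarrow> bool" where
  "carleson \<mu> \<longleftrightarrow> (\<lambda>t. measure \<mu> {t..<1}) \<in> O[at_left 1](\<lambda>t. 1 - t)"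

definition vanishing_carleson :: "real measure \<Rightarrow> bool" where
  "vanishing_carleson \<mu> \<longleftrightarrow> (\<lambda>t. measure \<mu> {t..<1}) \<in> o[at_left 1](\<lambda>t. 1 - t)"

end

theory Submission
  imports Defs
begin

context
  fixes \<mu> :: "real measure"
  assumes sets_mu: "sets \<mu> = sets (restrict_space borel {0..<1})"
  and fin: "finite_measure \<mu>"
begin

lemma space_mu: "space \<mu> = {0..<1}"
  using sets_eq_imp_space_eq[OF sets_mu] by simp

lemma meas_cont: "continuous_on {0..<1} g \<Longrightarrow> g \<in> borel_measurable \<mu>"
  using measurable_cong_sets[OF sets_mu refl] borel_measurable_continuous_on_restrict by blast

lemma tail_sets: "{t\<in>space \<mu>. s \<le> t} \<in> sets \<mu>"
proof -
  have "(\<lambda>t::real. t) \<in> borel_measurable \<mu>" by (rule meas_cont) (intro continuous_intros)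
  then show ?thesis by measurable
qed

lemma carleson_bound:
  assumes "carleson \<mu>"
  shows "\<exists>C>0. \<forall>s<1. measure \<mu> {t\<in>space \<mu>. s \<le> t} \<le> C*(1-s)"
proof -
  interpret finite_measure \<mu> by (rule fin)
  from assms obtain c where c: "c > 0"
    "eventually (\<lambda>t. norm (measure \<mu> {t..<1}) \<le> c * norm (1-t)) (at_left (1::real))"
    unfolding carleson_def by (elim landau_o.bigE) auto
  then obtain b where b: "b < 1" "\<And>y. b < y \<Longrightarrow> y < 1 \<Longrightarrow> norm (measure \<mu> {y..<1}) \<le> c * norm (1-y)"
    by (auto simp: eventually_at_left_field)
  define b' where "b' = max b 0"
  have b': "0 \<le> b'" "b' < 1" using b by (auto simp: b'_def)
  define C where "C = max c (measure \<mu> (space \<mu>) / (1-b'))"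
  have C: "C > 0" using c by (auto simp: C_def)
  have "measure \<mu> {t\<in>space \<mu>. s \<le> t} \<le> C*(1-s)" if s: "s < 1" for s
  proof (cases "s \<le> b'")
    case True
    have "measure \<mu> {t\<in>space \<mu>. s \<le> t} \<le> measure \<mu> (space \<mu>)"
      by (rule bounded_measure)
    also have "\<dots> = (measure \<mu> (space \<mu>) / (1-b')) * (1-b')" using b' by simp
    also have "\<dots> \<le> C * (1-s)"
      by (rule mult_mono) (use True b' C in \<open>auto simp: C_def\<close>)
    finally show ?thesis .
  next
    case False
    then have eq: "{t\<in>space \<mu>. s \<le> t} = {s..<1}" using b' by (auto simp: space_mu)
    have "measure \<mu> {s..<1} \<le> c * (1-s)" using b(2)[of s] False s by (auto simp: b'_def)
    also have "\<dots> \<le> C * (1-s)" using s by (intro mult_right_mono) (auto simp: C_def)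
    finally show ?thesis by (simp add: eq)
  qed
  with C show ?thesis by blast
qed

end

lemma ennreal_term_le_suminf: "(g k::ennreal) \<le> suminf g"
  using sum_le_suminf[of g "{k}"] by simp

lemma dyadic_bound:
  fixes M :: "'a measure" and \<phi> :: "'a \<Rightarrow> real"
  assumes fin: "finite_measure M"
  and \<phi>m: "\<phi> \<in> borel_measurable M" and \<phi>nn: "\<And>t. t \<in> space M \<Longrightarrow> 0 \<le> \<phi> t"
  and A: "\<And>k. A k \<in> sets M" and B: "\<And>k. B k \<in> sets M"
  and c: "\<And>k. 0 \<le> c k" and d: "\<And>k. 0 \<le> d k"
  and sA: "summable (\<lambda>k. c k * measure M (A k))"
  and sB: "summable (\<lambda>k. d k * measure M (B k))"
  and cover: "\<And>t. t \<in> space M \<Longrightarrow> (\<exists>k. t \<in> A k \<and> \<phi> t \<le> c k) \<or> (\<exists>k. t \<in> B k \<and> \<phi> t \<le> d k)"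
  shows "integrable M \<phi> \<and> integral\<^sup>L M \<phi> \<le> (\<Sum>k. c k * measure M (A k)) + (\<Sum>k. d k * measure M (B k))"
proof -
  interpret finite_measure M by (rule fin)
  define S where "S = (\<Sum>k. c k * measure M (A k)) + (\<Sum>k. d k * measure M (B k))"
  have S0: "0 \<le> S" unfolding S_def using c d
    by (intro add_nonneg_nonneg suminf_nonneg sA sB mult_nonneg_nonneg) auto
  have "(\<integral>\<^sup>+t. ennreal (\<phi> t) \<partial>M) \<le> (\<integral>\<^sup>+t. (\<Sum>k. ennreal (c k) * indicator (A k) t) + (\<Sum>k. ennreal (d k) * indicator (B k) t) \<partial>M)"
  proof (rule nn_integral_mono)
    fix t assume t: "t \<in> space M"
    from cover[OF t] show "ennreal (\<phi> t) \<le> (\<Sum>k. ennreal (c k) * indicator (A k) t) + (\<Sum>k. ennreal (d k) * indicator (B k) t)"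
    proof
      assume "\<exists>k. t \<in> A k \<and> \<phi> t \<le> c k"
      then obtain k where k: "t \<in> A k" "\<phi> t \<le> c k" by blast
      have "ennreal (\<phi> t) \<le> ennreal (c k) * indicator (A k) t" using k by (simp add: ennreal_leI)
      also have "\<dots> \<le> (\<Sum>k. ennreal (c k) * indicator (A k) t)"
        by (rule ennreal_term_le_suminf)
      also have "\<dots> \<le> (\<Sum>k. ennreal (c k) * indicator (A k) t) + (\<Sum>k. ennreal (d k) * indicator (B k) t)"
        by (rule add_increasing2) auto
      finally show ?thesis .
    next
      assume "\<exists>k. t \<in> B k \<and> \<phi> t \<le> d k"
      then obtain k where k: "t \<in> B k" "\<phi> t \<le> d k" by blast
      have "ennreal (\<phi> t) \<le> ennreal (d k) * indicator (B k) t" using k by (simp add: ennreal_leI)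
      also have "\<dots> \<le> (\<Sum>k. ennreal (d k) * indicator (B k) t)"
        by (rule ennreal_term_le_suminf)
      also have "\<dots> \<le> (\<Sum>k. ennreal (c k) * indicator (A k) t) + (\<Sum>k. ennreal (d k) * indicator (B k) t)"
        by (rule add_increasing) auto
      finally show ?thesis .
    qed
  qed
  also have "\<dots> = (\<integral>\<^sup>+t. (\<Sum>k. ennreal (c k) * indicator (A k) t) \<partial>M) + (\<integral>\<^sup>+t. (\<Sum>k. ennreal (d k) * indicator (B k) t) \<partial>M)"
    using A B by (intro nn_integral_add) auto
  also have "\<dots> = (\<Sum>k. \<integral>\<^sup>+t. ennreal (c k) * indicator (A k) t \<partial>M) + (\<Sum>k. \<integral>\<^sup>+t. ennreal (d k) * indicator (B k) t \<partial>M)"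
    using A B by (simp add: nn_integral_suminf)
  also have "\<dots> = (\<Sum>k. ennreal (c k * measure M (A k))) + (\<Sum>k. ennreal (d k * measure M (B k)))"
    using A B c d by (simp add: nn_integral_cmult_indicator emeasure_eq_measure ennreal_mult)
  also have "\<dots> = ennreal S"
    unfolding S_def using c d sA sB
    by (subst suminf_ennreal2, simp, simp)+ (simp add: ennreal_plus suminf_nonneg)
  finally have le: "(\<integral>\<^sup>+t. ennreal (\<phi> t) \<partial>M) \<le> ennreal S" .
  have int: "integrable M \<phi>"
  proof (rule integrableI_bounded)
    have "(\<integral>\<^sup>+t. ennreal (norm (\<phi> t)) \<partial>M) = (\<integral>\<^sup>+t. ennreal (\<phi> t) \<partial>M)"
      using \<phi>nn by (intro nn_integral_cong) auto
    also note le
    also have "ennreal S < \<infinity>" by simp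
    finally show "(\<integral>\<^sup>+t. ennreal (norm (\<phi> t)) \<partial>M) < \<infinity>" .
  qed (rule \<phi>m)
  have "ennreal (integral\<^sup>L M \<phi>) = (\<integral>\<^sup>+t. ennreal (\<phi> t) \<partial>M)"
    using \<phi>nn int by (intro nn_integral_eq_integral[symmetric]) auto
  with le have "ennreal (integral\<^sup>L M \<phi>) \<le> ennreal S" by simp
  with S0 have "integral\<^sup>L M \<phi> \<le> S" by (simp add: ennreal_le_iff)
  with int show ?thesis by (simp add: S_def)
qed

lemma ex2pow:
  fixes x :: real assumes "x \<ge> 1"
  shows "\<exists>k::nat. 2 powr real k \<le> x \<and> x < 2 powr (real k + 1)"
proof -
  define j where "j = \<lfloor>log 2 x\<rfloor>"
  have j: "2 powr j \<le> x \<and> x < 2 powr (j + 1)"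
    using floor_log_eq_powr_iff[of x 2 j] assms by (simp add: j_def)
  have "j \<ge> 0" using assms unfolding j_def by simp
  then have "real (nat j) = of_int j" by simp
  with j show ?thesis by (intro exI[of _ "nat j"]) simp
qed

context
  fixes \<mu> :: "real measure" and C :: real
  assumes sets_mu: "sets \<mu> = sets (restrict_space borel {0..<1})"
  and fin: "finite_measure \<mu>"
  and Cpos: "C > 0"
  and Cb: "\<And>s. s < 1 \<Longrightarrow> measure \<mu> {t\<in>space \<mu>. s \<le> t} \<le> C*(1-s)"
begin

lemma space_mu': "space \<mu> = {0..<1}"
  using sets_eq_imp_space_eq[OF sets_mu] by simp

lemma meas_cont': "continuous_on {0..<1} g \<Longrightarrow> g \<in> borel_measurable \<mu>"
  using measurable_cong_sets[OF sets_mu refl] borel_measurable_continuous_on_restrict by blast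

lemma tail_sets': "{t\<in>space \<mu>. s \<le> t} \<in> sets \<mu>"
proof -
  have "(\<lambda>t::real. t) \<in> borel_measurable \<mu>" by (rule meas_cont') (intro continuous_intros)
  then show ?thesis by measurable
qed

lemma main_est:
  assumes g: "0 < \<gamma>" "\<gamma> < 1" and r: "0 \<le> r" "r < 1"
  shows "integrable \<mu> (\<lambda>t. (1-t) powr (-\<gamma>) / (1-t*r)) \<and>
         integral\<^sup>L \<mu> (\<lambda>t. (1-t) powr (-\<gamma>) / (1-t*r)) \<le>
           (C * 2 powr \<gamma> / (1 - 2 powr (\<gamma>-1)) + 2 * C / (1 - 2 powr (-\<gamma>))) * (1-r) powr (-\<gamma>)"
proof -
  define A where "A k = {t\<in>space \<mu>. 1-(1-r)*2 powr (-real k) \<le> t}" for k :: nat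
  define B where "B k = {t\<in>space \<mu>. 1-(1-r)*2 powr (real k + 1) \<le> t}" for k :: nat
  define c where "c k = ((1-r)*2 powr (-(real k + 1))) powr (-\<gamma>) / (1-r)" for k :: nat
  define d where "d k = ((1-r)*2 powr (real k)) powr (-\<gamma>-1)" for k :: nat
  define q1 where "q1 = 2 powr (\<gamma>-1)"
  define q2 where "q2 = 2 powr (-\<gamma>)"
  have q1: "0 < q1" "q1 < 1" using g powr_less_mono[of "\<gamma>-1" 0 2] by (auto simp: q1_def)
  have q2: "0 < q2" "q2 < 1" using g powr_less_mono[of "-\<gamma>" 0 2] by (auto simp: q2_def)
  define R where "R = (1-r) powr (-\<gamma>)"
  have R: "R > 0" using r by (simp add: R_def)
  have cA: "c k * measure \<mu> (A k) \<le> C * 2 powr \<gamma> * R * q1^k" for k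
  proof -
    have "measure \<mu> (A k) \<le> C * (1 - (1-(1-r)*2 powr (-real k)))"
      unfolding A_def using r by (intro Cb) simp
    also have "\<dots> = C * (1-r) * 2 powr (-real k)" by simp
    finally have m: "measure \<mu> (A k) \<le> C * (1-r) * 2 powr (-real k)" .
    have c0: "c k \<ge> 0" using r by (simp add: c_def)
    have "c k * measure \<mu> (A k) \<le> c k * (C * (1-r) * 2 powr (-real k))"
      by (rule mult_left_mono[OF m c0])
    also have "\<dots> = C * R * (2 powr (-(real k + 1))) powr (-\<gamma>) * 2 powr (-real k)"
      using r by (simp add: c_def R_def powr_mult)
    also have "\<dots> = C * R * 2 powr (\<gamma> + (\<gamma> - 1) * real k)"
      by (simp add: powr_powr powr_add[symmetric] algebra_simps)
    also have "\<dots> = C * 2 powr \<gamma> * R * q1^k"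
      by (simp add: q1_def powr_add powr_realpow[symmetric] powr_powr mult.commute)
    finally show ?thesis .
  qed
  have dB: "d k * measure \<mu> (B k) \<le> 2 * C * R * q2^k" for k
  proof -
    have "measure \<mu> (B k) \<le> C * (1 - (1-(1-r)*2 powr (real k + 1)))"
      unfolding B_def using r by (intro Cb) simp
    also have "\<dots> = C * (1-r) * 2 powr (real k + 1)" by simp
    finally have m: "measure \<mu> (B k) \<le> C * (1-r) * 2 powr (real k + 1)" .
    have d0: "d k \<ge> 0" using r by (simp add: d_def)
    have "d k * measure \<mu> (B k) \<le> d k * (C * (1-r) * 2 powr (real k + 1))"
      by (rule mult_left_mono[OF m d0])
    also have "\<dots> = C * ((1-r) powr (-\<gamma>-1) * (1-r)) * ((2 powr (real k)) powr (-\<gamma>-1) * 2 powr (real k + 1))"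
      using r by (simp add: d_def powr_mult)
    also have "(1-r) powr (-\<gamma>-1) * (1-r) = R"
      using r by (simp add: R_def powr_add[symmetric] powr_diff)
    also have "(2 powr (real k)) powr (-\<gamma>-1) * 2 powr (real k + 1) = 2 * 2 powr (-\<gamma> * real k)"
    proof -
      have "(2 powr (real k)) powr (-\<gamma>-1) * 2 powr (real k + 1) = 2 powr (real k * (-\<gamma>-1) + (real k + 1))"
        by (simp add: powr_powr powr_add)
      also have "real k * (-\<gamma>-1) + (real k + 1) = 1 + (-\<gamma> * real k)" by algebra
      also have "(2::real) powr (1 + (-\<gamma> * real k)) = 2 * 2 powr (-\<gamma> * real k)"
        by (subst powr_add) simp
      finally show ?thesis .
    qed
    also have "C * R * (2 * 2 powr (-\<gamma> * real k)) = 2 * C * R * q2^k"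
      by (simp add: q2_def powr_realpow[symmetric] powr_powr mult.commute)
    finally show ?thesis .
  qed
  define \<phi> where "\<phi> t = (1-t) powr (-\<gamma>) / (1-t*r)" for t :: real
  have tr: "t * r < 1" if "0 \<le> t" "t < 1" for t
  proof -
    have "t * r \<le> 1 * r" using that r by (intro mult_right_mono) auto
    then show ?thesis using r by simp
  qed
  have \<phi>m: "\<phi> \<in> borel_measurable \<mu>"
    unfolding \<phi>_def
  proof (rule meas_cont')
    show "continuous_on {0..<1} (\<lambda>t. (1 - t) powr - \<gamma> / (1 - t * r))"
      using tr by (intro continuous_intros) (auto, fastforce)
  qed
  have \<phi>nn: "0 \<le> \<phi> t" if "t \<in> space \<mu>" for t
    using that tr[of t] by (auto simp: \<phi>_def space_mu')
  have c0: "0 \<le> c k" for k using r by (simp add: c_def)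
  have d0: "0 \<le> d k" for k using r by (simp add: d_def)
  have sg1: "summable (\<lambda>k. C * 2 powr \<gamma> * R * q1^k)"
    using q1 by (intro summable_mult summable_geometric) auto
  have sg2: "summable (\<lambda>k. 2 * C * R * q2^k)"
    using q2 by (intro summable_mult summable_geometric) auto
  have sA: "summable (\<lambda>k. c k * measure \<mu> (A k))"
    by (rule summable_comparison_test[OF _ sg1]) (use cA c0 in \<open>auto intro!: exI[of _ 0]\<close>)
  have sB: "summable (\<lambda>k. d k * measure \<mu> (B k))"
    by (rule summable_comparison_test[OF _ sg2]) (use dB d0 in \<open>auto intro!: exI[of _ 0]\<close>)
  have cover: "(\<exists>k. t \<in> A k \<and> \<phi> t \<le> c k) \<or> (\<exists>k. t \<in> B k \<and> \<phi> t \<le> d k)"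
    if t: "t \<in> space \<mu>" for t
  proof -
    have t01: "0 \<le> t" "t < 1" using t by (auto simp: space_mu')
    have trr: "t * r < 1" by (rule tr[OF t01])
    show ?thesis
    proof (cases "r \<le> t")
      case True
      have x1: "(1-r)/(1-t) \<ge> 1" using True t01 by (simp add: field_simps)
      obtain k :: nat where k: "2 powr real k \<le> (1-r)/(1-t)" "(1-r)/(1-t) < 2 powr (real k + 1)"
        using ex2pow[OF x1] by blast
      have k1: "(1-t) * 2 powr real k \<le> 1-r" using k(1) t01 by (simp add: field_simps)
      have k2: "1-r < (1-t) * 2 powr (real k + 1)" using k(2) t01 by (simp add: field_simps)
      have inA: "t \<in> A k"
      proof -
        have "1-t \<le> (1-r) * 2 powr (-real k)"
          using k1 by (simp add: powr_minus_divide field_simps)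
        then show ?thesis using t by (simp add: A_def)
      qed
      have "\<phi> t \<le> (1-t) powr (-\<gamma>) / (1-r)"
        unfolding \<phi>_def using t01 r trr True mult_left_le_one_le[of r t]
        by (intro divide_left_mono) (auto intro!: mult_pos_pos simp: mult_le_cancel_right1)
      also have "(1-t) powr (-\<gamma>) \<le> ((1-r)*2 powr (-(real k + 1))) powr (-\<gamma>)"
      proof (rule powr_mono2')
        have eq: "(1-r)*2 powr (-(real k + 1)) = (1-r) / 2 powr (real k + 1)"
          by (simp only: powr_minus divide_inverse)
        have "(1-r) / 2 powr (real k + 1) \<le> 1-t"
          using k2 by (subst pos_divide_le_eq) auto
        then show "(1-r)*2 powr (-(real k + 1)) \<le> 1-t" by (simp only: eq)
      qed (use g r in auto)
      then have "(1-t) powr (-\<gamma>) / (1-r) \<le> c k"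
        unfolding c_def using r by (intro divide_right_mono) auto
      finally show ?thesis using inA by blast
    next
      case False
      have x1: "(1-t)/(1-r) \<ge> 1" using False r by (simp add: field_simps)
      obtain k :: nat where k: "2 powr real k \<le> (1-t)/(1-r)" "(1-t)/(1-r) < 2 powr (real k + 1)"
        using ex2pow[OF x1] by blast
      have k1: "(1-r) * 2 powr real k \<le> 1-t" using k(1) r by (simp add: field_simps)
      have k2: "1-t < (1-r) * 2 powr (real k + 1)" using k(2) r by (simp add: field_simps)
      have inB: "t \<in> B k" using t k2 by (simp add: B_def)
      have "\<phi> t \<le> (1-t) powr (-\<gamma>) / (1-t)"
        unfolding \<phi>_def using t01 r trr mult_right_le_one_le[of t r]
        by (intro divide_left_mono) (auto intro!: mult_pos_pos simp: mult_le_cancel_left1)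
      also have "\<dots> = (1-t) powr (-\<gamma>-1)"
        using t01 by (simp add: powr_diff)
      also have "\<dots> \<le> d k"
        unfolding d_def
      proof (rule powr_mono2')
        show "(1-r)*2 powr real k \<le> 1-t" by (rule k1)
      qed (use g r in auto)
      finally show ?thesis using inB by blast
    qed
  qed
  have main: "integrable \<mu> \<phi> \<and> integral\<^sup>L \<mu> \<phi> \<le> (\<Sum>k. c k * measure \<mu> (A k)) + (\<Sum>k. d k * measure \<mu> (B k))"
  proof -
    have Am: "A k \<in> sets \<mu>" for k unfolding A_def by (rule tail_sets')
    have Bm: "B k \<in> sets \<mu>" for k unfolding B_def by (rule tail_sets')
    show ?thesis by (rule dyadic_bound[OF fin \<phi>m \<phi>nn Am Bm c0 d0 sA sB cover])
  qed
  have s1: "(\<Sum>k. c k * measure \<mu> (A k)) \<le> (\<Sum>k. C * 2 powr \<gamma> * R * q1^k)"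
    by (rule suminf_le[OF cA sA sg1])
  have s2: "(\<Sum>k. d k * measure \<mu> (B k)) \<le> (\<Sum>k. 2 * C * R * q2^k)"
    by (rule suminf_le[OF dB sB sg2])
  have e1: "(\<Sum>k. C * 2 powr \<gamma> * R * q1^k) = C * 2 powr \<gamma> * R / (1 - q1)"
    using q1 by (simp add: suminf_mult suminf_geometric)
  have e2: "(\<Sum>k. 2 * C * R * q2^k) = 2 * C * R / (1 - q2)"
    using q2 by (simp add: suminf_mult suminf_geometric)
  have "integral\<^sup>L \<mu> \<phi> \<le> C * 2 powr \<gamma> * R / (1 - q1) + 2 * C * R / (1 - q2)"
    using main s1 s2 e1 e2 by linarith
  also have "\<dots> = (C * 2 powr \<gamma> / (1 - 2 powr (\<gamma>-1)) + 2 * C / (1 - 2 powr (-\<gamma>))) * (1-r) powr (-\<gamma>)"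
    by (simp add: q1_def q2_def R_def field_simps)
  finally show ?thesis using main unfolding \<phi>_def by blast
qed

end

lemma Hv_le: "f \<in> Hv \<gamma> \<Longrightarrow> z \<in> ball 0 1 \<Longrightarrow> (1 - norm z) powr \<gamma> * norm (f z) \<le> normv \<gamma> f"
  unfolding Hv_def normv_def by (intro cSUP_upper) auto

lemma Hv_normv_nonneg: "f \<in> Hv \<gamma> \<Longrightarrow> 0 \<le> normv \<gamma> f"
  using Hv_le[of f \<gamma> 0] by (smt (verit) mem_ball norm_ge_zero norm_zero powr_ge_zero zero_le_mult_iff zero_less_one dist_0_norm)

lemma Hv_holo: "f \<in> Hv \<gamma> \<Longrightarrow> f holomorphic_on ball 0 1"
  unfolding Hv_def by auto

lemma Hv_pt: assumes "f \<in> Hv \<gamma>" "z \<in> ball 0 1"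
  shows "norm (f z) \<le> normv \<gamma> f * (1 - norm z) powr (-\<gamma>)"
proof -
  have z: "norm z < 1" using assms by simp
  have "norm (f z) = ((1 - norm z) powr \<gamma> * norm (f z)) * (1 - norm z) powr (-\<gamma>)"
    using z by (simp add: powr_minus field_simps)
  also have "\<dots> \<le> normv \<gamma> f * (1 - norm z) powr (-\<gamma>)"
    by (intro mult_right_mono Hv_le assms) simp
  finally show ?thesis .
qed

lemma HvI:
  assumes "f holomorphic_on ball 0 1" "\<And>z. z \<in> ball 0 1 \<Longrightarrow> (1 - norm z) powr \<gamma> * norm (f z) \<le> M"
  shows "f \<in> Hv \<gamma> \<and> normv \<gamma> f \<le> M"
proof
  show "f \<in> Hv \<gamma>" unfolding Hv_def using assms by (auto intro!: bdd_aboveI2)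
  show "normv \<gamma> f \<le> M" unfolding normv_def using assms(2) by (intro cSUP_least) auto
qed

lemma Hv_diff:
  assumes f: "f \<in> Hv \<gamma>" and g: "g \<in> Hv \<gamma>"
  shows "(\<lambda>z. g z - f z) \<in> Hv \<gamma>"
proof -
  have "(1 - norm z) powr \<gamma> * norm (g z - f z) \<le> normv \<gamma> g + normv \<gamma> f" if z: "z \<in> ball 0 1" for z
  proof -
    have "(1 - norm z) powr \<gamma> * norm (g z - f z) \<le> (1 - norm z) powr \<gamma> * (norm (g z) + norm (f z))"
      by (intro mult_left_mono norm_triangle_ineq4) simp
    also have "\<dots> = (1 - norm z) powr \<gamma> * norm (g z) + (1 - norm z) powr \<gamma> * norm (f z)"
      by (simp add: algebra_simps)
    also have "\<dots> \<le> normv \<gamma> g + normv \<gamma> f" using Hv_le[OF f z] Hv_le[OF g z] by linarith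
    finally show ?thesis .
  qed
  then show ?thesis using HvI[of "\<lambda>z. g z - f z"] Hv_holo[OF f] Hv_holo[OF g]
    by (auto intro!: holomorphic_intros)
qed

context
  fixes \<mu> :: "real measure"
  assumes sets_mu: "sets \<mu> = sets (restrict_space borel {0..<1})"
  and fin: "finite_measure \<mu>"
begin

lemma space_mu'': "space \<mu> = {0..<1}"
  using sets_eq_imp_space_eq[OF sets_mu] by simp

lemma meas_cont'': "continuous_on {0..<1} g \<Longrightarrow> g \<in> borel_measurable \<mu>"
  using measurable_cong_sets[OF sets_mu refl] borel_measurable_continuous_on_restrict by blast

lemma norm_1_tz: assumes "0 \<le> t" "t < 1" "norm z < 1"
  shows "1 - t * norm z \<le> norm (1 - complex_of_real t * z)" "0 < 1 - t * norm z"
proof -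
  have "norm (complex_of_real t * z) = t * norm z" using assms by (simp add: norm_mult)
  then show "1 - t * norm z \<le> norm (1 - complex_of_real t * z)"
    by (metis norm_one norm_triangle_ineq2)
  have "t * norm z \<le> 1 * norm z" using assms by (intro mult_right_mono) auto
  then show "0 < 1 - t * norm z" using assms by simp
qed

lemma holo_general:
  fixes h :: "real \<Rightarrow> complex"
  assumes hi: "integrable \<mu> h"
  shows "(\<lambda>z. \<integral>t. h t / (1 - complex_of_real t * z) \<partial>\<mu>) holomorphic_on ball 0 1"
proof -
  interpret finite_measure \<mu> by (rule fin)
  define a where "a n = (\<integral>t. h t * complex_of_real t ^ n \<partial>\<mu>)" for n
  define M0 where "M0 = (\<integral>t. norm (h t) \<partial>\<mu>)"
  have M0: "0 \<le> M0" unfolding M0_def by simp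
  have ofr: "(\<lambda>t. complex_of_real t) \<in> borel_measurable \<mu>"
    by (rule meas_cont'') (intro continuous_intros)
  have hm: "h \<in> borel_measurable \<mu>" using hi by auto
  have tle: "norm (complex_of_real t) \<le> 1" if "t \<in> space \<mu>" for t
    using that by (auto simp: space_mu'')
  have int_pow: "integrable \<mu> (\<lambda>t. h t * (complex_of_real t * w) ^ n)" if w: "norm w \<le> 1" for w n
  proof (rule Bochner_Integration.integrable_bound[OF integrable_norm[OF hi]])
    show "(\<lambda>t. h t * (complex_of_real t * w) ^ n) \<in> borel_measurable \<mu>"
      using hm ofr by measurable
    show "AE t in \<mu>. norm (h t * (complex_of_real t * w) ^ n) \<le> norm (norm (h t))"
    proof (rule AE_I2)
      fix t assume t: "t \<in> space \<mu>"
      have "norm ((complex_of_real t * w) ^ n) \<le> 1"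
        using tle[OF t] w by (simp add: norm_mult norm_power power_le_one mult_le_one)
      then show "norm (h t * (complex_of_real t * w) ^ n) \<le> norm (norm (h t))"
        by (simp add: norm_mult mult_left_le)
    qed
  qed
  have a_bd: "norm (a n) \<le> M0" for n
  proof -
    have "norm (a n) \<le> (\<integral>t. norm (h t * complex_of_real t ^ n) \<partial>\<mu>)"
      unfolding a_def by (rule integral_norm_bound)
    also have "\<dots> \<le> M0"
      unfolding M0_def
    proof (rule integral_mono)
      show "integrable \<mu> (\<lambda>t. norm (h t * complex_of_real t ^ n))"
        using int_pow[of 1 n] by simp
      show "integrable \<mu> (\<lambda>t. norm (h t))" using hi by simp
      fix t assume t: "t \<in> space \<mu>"
      then show "norm (h t * complex_of_real t ^ n) \<le> norm (h t)"
        using tle[OF t] by (simp add: norm_mult norm_power power_le_one mult_left_le)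
    qed
    finally show ?thesis .
  qed
  have eq: "(\<integral>t. h t / (1 - complex_of_real t * z) \<partial>\<mu>) = (\<Sum>n. a n * z ^ n)" if z: "z \<in> ball 0 1" for z
  proof -
    define F where "F i t = h t * (complex_of_real t * z) ^ i" for i t
    have z1: "norm z < 1" using z by simp
    have tz: "norm (complex_of_real t * z) < 1" if "t \<in> space \<mu>" for t
    proof -
      have "norm (complex_of_real t * z) \<le> 1 * norm z"
        using tle[OF that] by (simp add: norm_mult mult_left_le_one_le)
      then show ?thesis using z1 by simp
    qed
    have Fi: "integrable \<mu> (F i)" for i unfolding F_def using int_pow z1 by simp
    have Fs: "AE t in \<mu>. summable (\<lambda>i. norm (F i t))"
    proof (rule AE_I2)
      fix t assume t: "t \<in> space \<mu>"
      have "summable (\<lambda>i. norm (h t) * norm (complex_of_real t * z) ^ i)"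
        using tz[OF t] by (intro summable_mult summable_geometric) simp
      then show "summable (\<lambda>i. norm (F i t))" by (simp add: F_def norm_mult norm_power)
    qed
    have Fn: "(\<integral>t. norm (F i t) \<partial>\<mu>) \<le> M0 * norm z ^ i" for i
    proof -
      have "(\<integral>t. norm (F i t) \<partial>\<mu>) \<le> (\<integral>t. norm (h t) * norm z ^ i \<partial>\<mu>)"
      proof (rule integral_mono)
        show "integrable \<mu> (\<lambda>t. norm (F i t))" using Fi by simp
        show "integrable \<mu> (\<lambda>t. norm (h t) * norm z ^ i)" using hi by simp
        fix t assume t: "t \<in> space \<mu>"
        have "norm (complex_of_real t * z) ^ i \<le> norm z ^ i"
          using tle[OF t] by (intro power_mono) (auto simp: norm_mult intro!: mult_left_le_one_le)
        then show "norm (F i t) \<le> norm (h t) * norm z ^ i"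
          by (simp add: F_def norm_mult norm_power mult_left_mono)
      qed
      also have "\<dots> = M0 * norm z ^ i" unfolding M0_def by simp
      finally show ?thesis .
    qed
    have Fsum: "summable (\<lambda>i. \<integral>t. norm (F i t) \<partial>\<mu>)"
    proof (rule summable_comparison_test[OF _ summable_mult[OF summable_geometric[of "norm z"]]])
      show "norm (norm z) < 1" using z1 by simp
      show "\<exists>N. \<forall>n\<ge>N. norm (\<integral>t. norm (F n t) \<partial>\<mu>) \<le> M0 * norm z ^ n"
        using Fn by (auto intro!: exI[of _ 0])
    qed
    have "(\<integral>t. (\<Sum>i. F i t) \<partial>\<mu>) = (\<Sum>i. integral\<^sup>L \<mu> (F i))"
      by (rule integral_suminf[OF Fi Fs Fsum])
    moreover have "(\<integral>t. (\<Sum>i. F i t) \<partial>\<mu>) = (\<integral>t. h t / (1 - complex_of_real t * z) \<partial>\<mu>)"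
    proof (rule Bochner_Integration.integral_cong[OF refl])
      fix t assume t: "t \<in> space \<mu>"
      have "(\<Sum>i. F i t) = h t * (\<Sum>i. (complex_of_real t * z) ^ i)"
        unfolding F_def using tz[OF t] by (intro suminf_mult summable_geometric) simp
      also have "\<dots> = h t / (1 - complex_of_real t * z)"
        using tz[OF t] by (simp add: suminf_geometric divide_inverse)
      finally show "(\<Sum>i. F i t) = h t / (1 - complex_of_real t * z)" .
    qed
    moreover have "integral\<^sup>L \<mu> (F i) = a i * z ^ i" for i
      unfolding F_def a_def power_mult_distrib mult.assoc[symmetric]
      by (rule integral_mult_left_zero)
    ultimately show ?thesis by simp
  qed
  have conv: "conv_radius a \<ge> 1"
  proof (rule conv_radius_geI_ex')
    fix r :: real assume r: "0 < r" "ereal r < 1"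
    show "summable (\<lambda>n. a n * complex_of_real r ^ n)"
    proof (rule summable_comparison_test[OF _ summable_mult[OF summable_geometric[of r]]])
      show "norm r < 1" using r by simp
      show "\<exists>N. \<forall>n\<ge>N. norm (a n * complex_of_real r ^ n) \<le> M0 * r ^ n"
        using a_bd r by (auto simp: norm_mult norm_power intro!: exI[of _ 0] mult_right_mono)
    qed
  qed
  have "(\<lambda>z. \<Sum>n. a n * z ^ n) holomorphic_on ball 0 1"
  proof (subst holomorphic_on_open[OF open_ball], safe)
    fix z :: complex assume z: "z \<in> ball 0 1"
    have zc: "ereal (norm z) < conv_radius a" using z conv
      by (metis dist_0_norm ereal_less(3) less_ereal.simps(1) mem_ball order_less_le_trans one_ereal_def)
    show "\<exists>f'. ((\<lambda>z. \<Sum>n. a n * z ^ n) has_field_derivative f') (at z)"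
      using has_field_derivative_powser[OF zc, of UNIV] by blast
  qed
  then show ?thesis
    by (rule holomorphic_cong[THEN iffD1, rotated 2]) (auto simp: eq)
qed

end

definition Kc :: "real \<Rightarrow> real \<Rightarrow> real" where
  "Kc C \<gamma> = C * 2 powr \<gamma> / (1 - 2 powr (\<gamma>-1)) + 2 * C / (1 - 2 powr (-\<gamma>))"

lemma Kc_pos: assumes "C > 0" "0 < \<gamma>" "\<gamma> < 1" shows "Kc C \<gamma> > 0"
proof -
  have "2 powr (\<gamma>-1) < 1" using assms powr_less_mono[of "\<gamma>-1" 0 2] by simp
  moreover have "2 powr (-\<gamma>) < (1::real)" using assms powr_less_mono[of "-\<gamma>" 0 2] by simp
  ultimately show ?thesis using assms unfolding Kc_def by (intro add_pos_pos divide_pos_pos) auto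
qed

lemma f_real_cont:
  assumes "f holomorphic_on ball 0 1" "norm z < 1"
  shows "continuous_on {0..<1} (\<lambda>t::real. f (complex_of_real t) / (1 - complex_of_real t * z))"
proof -
  have fc: "continuous_on (ball 0 1) f" using assms(1) by (rule holomorphic_on_imp_continuous_on)
  have "continuous_on {0..<1} (\<lambda>t::real. f (complex_of_real t))"
    by (rule continuous_on_compose2[OF fc]) (auto intro!: continuous_intros)
  moreover have "1 - complex_of_real t * z \<noteq> 0" if "t \<in> {0..<1}" for t
  proof
    assume "1 - complex_of_real t * z = 0"
    then have "norm (complex_of_real t * z) = 1" by (metis norm_one right_minus_eq)
    moreover have "norm (complex_of_real t * z) \<le> 1 * norm z" using that
      by (simp add: norm_mult mult_left_le_one_le)
    ultimately show False using assms by simp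
  qed
  ultimately show ?thesis by (intro continuous_intros) auto
qed

context
  fixes \<mu> :: "real measure" and C :: real
  assumes sets_mu: "sets \<mu> = sets (restrict_space borel {0..<1})"
  and fin: "finite_measure \<mu>"
  and Cpos: "C > 0"
  and Cb: "\<And>s. s < 1 \<Longrightarrow> measure \<mu> {t\<in>space \<mu>. s \<le> t} \<le> C*(1-s)"
begin

lemma W1:
  assumes g: "0 < \<gamma>" "\<gamma> < 1" and f: "f \<in> Hv \<gamma>" and z: "z \<in> ball 0 1"
  shows "integrable \<mu> (\<lambda>t. f (complex_of_real t) / (1 - complex_of_real t * z)) \<and>
         norm (Imu \<mu> f z) \<le> normv \<gamma> f * Kc C \<gamma> * (1 - norm z) powr (-\<gamma>)"
proof -
  define N where "N = normv \<gamma> f"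
  have N: "0 \<le> N" unfolding N_def by (rule Hv_normv_nonneg[OF f])
  have z1: "norm z < 1" "0 \<le> norm z" using z by auto
  define \<psi> where "\<psi> t = (1-t) powr (-\<gamma>) / (1-t*norm z)" for t
  have me: "integrable \<mu> \<psi> \<and> integral\<^sup>L \<mu> \<psi> \<le> Kc C \<gamma> * (1 - norm z) powr (-\<gamma>)"
    using main_est[OF sets_mu fin Cpos Cb g z1(2) z1(1)] unfolding \<psi>_def Kc_def by simp
  have sp: "space \<mu> = {0..<1}" by (rule space_mu''[OF sets_mu fin])
  have meas: "(\<lambda>t. f (complex_of_real t) / (1 - complex_of_real t * z)) \<in> borel_measurable \<mu>"
    by (rule meas_cont''[OF sets_mu fin f_real_cont[OF Hv_holo[OF f] z1(1)]])
  have pt: "norm (f (complex_of_real t) / (1 - complex_of_real t * z)) \<le> N * \<psi> t" if t: "t \<in> space \<mu>" for t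
  proof -
    have t01: "0 \<le> t" "t < 1" using t sp by auto
    have fb: "norm (f (complex_of_real t)) \<le> N * (1 - t) powr (-\<gamma>)"
      using Hv_pt[OF f, of "complex_of_real t"] t01 by (simp add: N_def)
    note nt = norm_1_tz[OF sets_mu fin t01 z1(1)]
    have "norm (f (complex_of_real t) / (1 - complex_of_real t * z))
          = norm (f (complex_of_real t)) / norm (1 - complex_of_real t * z)" by (simp add: norm_divide)
    also have "\<dots> \<le> N * (1 - t) powr (-\<gamma>) / (1 - t * norm z)"
      using fb nt N by (intro frac_le) auto
    finally show ?thesis by (simp add: \<psi>_def)
  qed
  have int: "integrable \<mu> (\<lambda>t. f (complex_of_real t) / (1 - complex_of_real t * z))"
  proof (rule Bochner_Integration.integrable_bound[OF _ meas])
    show "integrable \<mu> (\<lambda>t. N * \<psi> t)" using me by simp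
    show "AE t in \<mu>. norm (f (complex_of_real t) / (1 - complex_of_real t * z)) \<le> norm (N * \<psi> t)"
      using pt by (intro AE_I2) (metis abs_ge_self order_trans real_norm_def)
  qed
  have "norm (Imu \<mu> f z) \<le> (\<integral>t. norm (f (complex_of_real t) / (1 - complex_of_real t * z)) \<partial>\<mu>)"
    unfolding Imu_def by (rule integral_norm_bound)
  also have "\<dots> \<le> (\<integral>t. N * \<psi> t \<partial>\<mu>)"
    using int me pt by (intro integral_mono) auto
  also have "\<dots> = N * integral\<^sup>L \<mu> \<psi>" by simp
  also have "\<dots> \<le> N * (Kc C \<gamma> * (1 - norm z) powr (-\<gamma>))"
    using me N by (intro mult_left_mono) auto
  finally show ?thesis using int by (simp add: N_def mult.assoc)
qed

lemma Imu_Hv: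
  assumes g: "0 < \<gamma>" "\<gamma> < 1" and f: "f \<in> Hv \<gamma>"
  shows "Imu \<mu> f \<in> Hv \<gamma> \<and> normv \<gamma> (Imu \<mu> f) \<le> Kc C \<gamma> * normv \<gamma> f"
    and "Imu \<mu> f holomorphic_on ball 0 1"
proof -
  have i0: "integrable \<mu> (\<lambda>t. f (complex_of_real t))"
    using W1[OF g f, of 0] by simp
  have eq: "Imu \<mu> f = (\<lambda>z. \<integral>t. f (complex_of_real t) / (1 - complex_of_real t * z) \<partial>\<mu>)"
    by (rule ext) (simp add: Imu_def)
  show holo: "Imu \<mu> f holomorphic_on ball 0 1"
    unfolding eq by (rule holo_general[OF sets_mu fin i0])
  have "(1 - norm z) powr \<gamma> * norm (Imu \<mu> f z) \<le> Kc C \<gamma> * normv \<gamma> f" if z: "z \<in> ball 0 1" for z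
  proof -
    have z1: "norm z < 1" using z by simp
    have "(1 - norm z) powr \<gamma> * norm (Imu \<mu> f z) \<le> (1 - norm z) powr \<gamma> * (normv \<gamma> f * Kc C \<gamma> * (1 - norm z) powr (-\<gamma>))"
      using W1[OF g f z] by (intro mult_left_mono) auto
    also have "\<dots> = normv \<gamma> f * Kc C \<gamma> * ((1 - norm z) powr \<gamma> * (1 - norm z) powr (-\<gamma>))"
      by (simp add: algebra_simps)
    also have "(1 - norm z) powr \<gamma> * (1 - norm z) powr (-\<gamma>) = 1"
      using z1 by (simp add: powr_add[symmetric])
    finally show ?thesis by (simp add: mult.commute)
  qed
  then show "Imu \<mu> f \<in> Hv \<gamma> \<and> normv \<gamma> (Imu \<mu> f) \<le> Kc C \<gamma> * normv \<gamma> f"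
    by (intro HvI holo)
qed

lemma wd: assumes g: "0 < \<gamma>" "\<gamma> < 1" shows "Imu_well_defined \<mu> \<gamma>"
  unfolding Imu_well_defined_def using W1[OF g] Imu_Hv[OF g] by blast

lemma cont: assumes g: "0 < \<gamma>" "\<gamma> < 1" shows "Imu_continuous \<mu> \<gamma>"
  unfolding Imu_continuous_def
proof (intro conjI wd[OF g] ballI allI impI)
  fix f \<epsilon> assume f: "f \<in> Hv \<gamma>" and e: "(\<epsilon>::real) > 0"
  define K where "K = Kc C \<gamma>"
  have K: "K > 0" unfolding K_def by (rule Kc_pos[OF Cpos g])
  show "\<exists>\<delta>>0. \<forall>g\<in>Hv \<gamma>. normv \<gamma> (\<lambda>z. g z - f z) < \<delta> \<longrightarrow> normv \<gamma> (\<lambda>z. Imu \<mu> g z - Imu \<mu> f z) < \<epsilon>"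
  proof (intro exI[of _ "\<epsilon> / K"] conjI ballI impI)
    show "\<epsilon> / K > 0" using e K by simp
    fix h assume h: "h \<in> Hv \<gamma>" and hd: "normv \<gamma> (\<lambda>z. h z - f z) < \<epsilon> / K"
    have d: "(\<lambda>z. h z - f z) \<in> Hv \<gamma>" by (rule Hv_diff[OF f h])
    have "normv \<gamma> (\<lambda>z. Imu \<mu> h z - Imu \<mu> f z) = normv \<gamma> (Imu \<mu> (\<lambda>z. h z - f z))"
      unfolding normv_def
    proof (rule SUP_cong[OF refl])
      fix z :: complex assume z: "z \<in> ball 0 1"
      have ih: "integrable \<mu> (\<lambda>t. h (complex_of_real t) / (1 - complex_of_real t * z))"
        using W1[OF g h z] by blast
      have if': "integrable \<mu> (\<lambda>t. f (complex_of_real t) / (1 - complex_of_real t * z))"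
        using W1[OF g f z] by blast
      have "Imu \<mu> h z - Imu \<mu> f z = Imu \<mu> (\<lambda>z. h z - f z) z"
        unfolding Imu_def using Bochner_Integration.integral_diff[OF ih if'] by (simp add: diff_divide_distrib)
      then show "(1 - norm z) powr \<gamma> * norm (Imu \<mu> h z - Imu \<mu> f z) =
                 (1 - norm z) powr \<gamma> * norm (Imu \<mu> (\<lambda>z. h z - f z) z)" by simp
    qed
    also have "\<dots> \<le> K * normv \<gamma> (\<lambda>z. h z - f z)"
      using Imu_Hv(1)[OF g d] by (simp add: K_def)
    also have "\<dots> < K * (\<epsilon> / K)" using hd K by (intro mult_strict_left_mono) auto
    also have "\<dots> = \<epsilon>" using K by simp
    finally show "normv \<gamma> (\<lambda>z. Imu \<mu> h z - Imu \<mu> f z) < \<epsilon>" .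
  qed
qed

end

context
  fixes \<mu> :: "real measure"
  assumes sets_mu: "sets \<mu> = sets (restrict_space borel {0..<1})"
  and fin: "finite_measure \<mu>"
begin

lemma VC:
  assumes gi: "integrable \<mu> (\<lambda>t. 1 / (1 - t))"
  shows "vanishing_carleson \<mu>"
  unfolding vanishing_carleson_def
proof (rule landau_o.smallI)
  interpret finite_measure \<mu> by (rule fin)
  have sp: "space \<mu> = {0..<1}" by (rule space_mu''[OF sets_mu fin])
  fix c :: real assume c: "c > 0"
  define g where "g t = 1 / (1 - t)" for t :: real
  define S where "S s = {s..<(1::real)}" for s
  have Ssets: "S s \<in> sets \<mu>" if "0 \<le> s" for s
  proof -
    have Seq: "S s = {t\<in>space \<mu>. s \<le> t}" using that sp by (auto simp: S_def)
    have "(\<lambda>t::real. t) \<in> borel_measurable \<mu>"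
      by (rule meas_cont''[OF sets_mu fin]) (intro continuous_intros)
    then have "{t\<in>space \<mu>. s \<le> t} \<in> sets \<mu>" by measurable
    then show ?thesis using Seq by simp
  qed
  have gnn: "0 \<le> g t" if "t \<in> space \<mu>" for t using that sp by (auto simp: g_def)
  have gm: "g \<in> borel_measurable \<mu>" using gi unfolding g_def by (rule borel_measurable_integrable)
  have intS: "integrable \<mu> (\<lambda>t. g t * indicator (S s) t)" if "0 \<le> s" for s
    using gi Ssets[OF that] unfolding g_def by (intro integrable_real_mult_indicator) auto
  define sn where "sn n = 1 - 1 / real (Suc n)" for n
  have sn0: "0 \<le> sn n" for n by (simp add: sn_def field_simps)
  have lim: "(\<lambda>n. \<integral>t. g t * indicator (S (sn n)) t \<partial>\<mu>) \<longlonglongrightarrow> (\<integral>t. 0 \<partial>\<mu>)"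
  proof (rule integral_dominated_convergence[where w = g])
    show "(\<lambda>t. 0::real) \<in> borel_measurable \<mu>" by simp
    show "(\<lambda>t. g t * indicator (S (sn n)) t) \<in> borel_measurable \<mu>" for n
      using intS[OF sn0] by auto
    show "integrable \<mu> g" using gi by (simp add: g_def[abs_def])
    show "AE t in \<mu>. (\<lambda>n. g t * indicator (S (sn n)) t) \<longlonglongrightarrow> 0"
    proof (rule AE_I2)
      fix t assume t: "t \<in> space \<mu>"
      then have t1: "0 < 1 - t" using sp by auto
      obtain N where N: "inverse (real (Suc N)) < 1 - t"
        using reals_Archimedean[OF t1] by blast
      have "eventually (\<lambda>n. g t * indicator (S (sn n)) t = 0) sequentially"
        unfolding eventually_sequentially
      proof (intro exI[of _ N] allI impI)
        fix n assume n: "N \<le> n"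
        have "inverse (real (Suc n)) \<le> inverse (real (Suc N))" using n by (simp add: field_simps)
        then have "t < 1 - inverse (real (Suc n))" using N by linarith
        then have "t < sn n" by (simp add: sn_def inverse_eq_divide)
        then show "g t * indicator (S (sn n)) t = 0" by (simp add: S_def)
      qed
      then show "(\<lambda>n. g t * indicator (S (sn n)) t) \<longlonglongrightarrow> 0" by (rule tendsto_eventually)
    qed
    show "AE t in \<mu>. norm (g t * indicator (S (sn n)) t) \<le> g t" for n
      using gnn by (intro AE_I2) (auto simp: indicator_def)
  qed
  then have "eventually (\<lambda>n. (\<integral>t. g t * indicator (S (sn n)) t \<partial>\<mu>) < c) sequentially"
    using c by (intro order_tendstoD(2)) auto
  then obtain n where n: "(\<integral>t. g t * indicator (S (sn n)) t \<partial>\<mu>) < c"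
    by (auto simp: eventually_sequentially)
  have sn1: "sn n < 1" by (simp add: sn_def)
  have bound: "measure \<mu> {s..<1} \<le> c * (1 - s)" if s: "sn n < s" "s < 1" for s
  proof -
    have s0: "0 \<le> s" using sn0[of n] s by linarith
    have "measure \<mu> (S s) = (\<integral>t. indicator (S s) t \<partial>\<mu>)"
      using Ssets[OF s0] by (simp add: Int_absorb2 sets.sets_into_space)
    also have "\<dots> \<le> (\<integral>t. (1 - s) * (g t * indicator (S (sn n)) t) \<partial>\<mu>)"
    proof (rule integral_mono)
      show "integrable \<mu> (indicator (S s) :: real \<Rightarrow> real)"
        using Ssets[OF s0] by (intro integrable_real_indicator) (auto simp: emeasure_eq_measure top.not_eq_extremum)
      show "integrable \<mu> (\<lambda>t. (1 - s) * (g t * indicator (S (sn n)) t))"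
        using intS[OF sn0] by simp
      fix t assume t: "t \<in> space \<mu>"
      show "indicator (S s) t \<le> (1 - s) * (g t * indicator (S (sn n)) t)"
      proof (cases "t \<in> S s")
        case True
        then have st: "s \<le> t" "t < 1" "t \<in> S (sn n)" using s by (auto simp: S_def)
        have i1: "indicator (S s) t = (1::real)" using True by simp
        have i2: "indicator (S (sn n)) t = (1::real)" using st by simp
        have "1 \<le> (1 - s) / (1 - t)" using st by (simp add: le_divide_eq)
        then show ?thesis by (simp add: i1 i2 g_def)
      next
        case False then show ?thesis using gnn[OF t] s by simp
      qed
    qed
    also have "\<dots> = (1 - s) * (\<integral>t. g t * indicator (S (sn n)) t \<partial>\<mu>)" by simp
    also have "\<dots> \<le> (1 - s) * c" using n s by (intro mult_left_mono) auto
    finally show ?thesis by (simp add: S_def mult.commute)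
  qed
  show "\<forall>\<^sub>F t in at_left 1. norm (measure \<mu> {t..<1}) \<le> c * norm (1 - t)"
    unfolding eventually_at_left_field
    using sn1 bound by (intro exI[of _ "sn n"]) auto
qed

lemma not_wd:
  assumes nv: "\<not> vanishing_carleson \<mu>" and g: "\<gamma> \<ge> 1"
  shows "\<not> Imu_well_defined \<mu> \<gamma>"
proof
  assume wd: "Imu_well_defined \<mu> \<gamma>"
  define f where "f z = 1 / (1 - z)" for z :: complex
  have fH: "f \<in> Hv \<gamma>"
  proof -
    have "f holomorphic_on ball 0 1" unfolding f_def
      by (intro holomorphic_intros) auto
    moreover have "(1 - norm z) powr \<gamma> * norm (f z) \<le> 1" if z: "z \<in> ball 0 1" for z
    proof -
      have z1: "norm z < 1" using z by simp
      have n1: "1 - norm z \<le> norm (1 - z)" by (metis norm_one norm_triangle_ineq2)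
      have "(1 - norm z) powr \<gamma> \<le> (1 - norm z) powr 1"
        using z1 g by (intro powr_mono') auto
      also have "\<dots> = 1 - norm z" using z1 by simp
      finally have a: "(1 - norm z) powr \<gamma> \<le> 1 - norm z" .
      have "(1 - norm z) powr \<gamma> * norm (f z) = (1 - norm z) powr \<gamma> / norm (1 - z)"
        by (simp add: f_def norm_divide)
      also have "\<dots> \<le> 1" using a n1 z1 by (subst divide_le_eq_1) auto
      finally show ?thesis .
    qed
    ultimately show ?thesis using HvI by blast
  qed
  from wd fH have "\<forall>z\<in>ball 0 1. integrable \<mu> (\<lambda>t. f (complex_of_real t) / (1 - complex_of_real t * z))"
    unfolding Imu_well_defined_def by blast
  then have "integrable \<mu> (\<lambda>t. f (complex_of_real t) / (1 - complex_of_real t * 0))"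
    by (drule_tac bspec[of _ _ 0]) auto
  then have "integrable \<mu> (\<lambda>t. norm (f (complex_of_real t)))" by simp
  moreover have eqn: "norm (f (complex_of_real t)) = 1 / (1 - t)" if "t \<in> space \<mu>" for t
  proof -
    have "1 - complex_of_real t = complex_of_real (1 - t)" by simp
    then have "norm (1 - complex_of_real t) = 1 - t"
      using that space_mu''[OF sets_mu fin] by (simp only: norm_of_real) auto
    then show ?thesis by (simp add: f_def norm_divide)
  qed
  moreover have "integrable \<mu> (\<lambda>t. norm (f (complex_of_real t))) = integrable \<mu> (\<lambda>t. 1 / (1 - t))"
    by (rule Bochner_Integration.integrable_cong[OF refl]) (rule eqn)
  ultimately have "integrable \<mu> (\<lambda>t. 1 / (1 - t))" by simp
  then have "vanishing_carleson \<mu>" by (rule VC)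
  with nv show False by simp
qed

end

definition FT :: "real \<Rightarrow> real \<Rightarrow> complex \<Rightarrow> complex" where
  "FT \<gamma> T z = complex_of_real ((1-T) powr (1-\<gamma>)) / (1 - complex_of_real T * z)"

lemma LB_alg: "(x::real) > 0 \<Longrightarrow> p * (a / (2*x) / (2*x) * (c * x)) = c / 4 * (p * a / x)"
  by (simp add: field_simps)

lemma powr_interp:
  fixes a b m \<beta> :: real
  assumes "0 < a" "a \<le> m" "0 < b" "b \<le> m" "0 \<le> \<beta>" "\<beta> \<le> 1"
  shows "a powr \<beta> * b powr (1-\<beta>) \<le> m"
proof -
  have "a powr \<beta> * b powr (1-\<beta>) \<le> m powr \<beta> * m powr (1-\<beta>)"
    using assms by (intro mult_mono powr_mono2) auto
  also have "\<dots> = m" using assms by (simp add: powr_add[symmetric])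
  finally show ?thesis .
qed

lemma FT_Hv:
  assumes g: "0 < \<gamma>" "\<gamma> < 1" and T: "0 \<le> T" "T < 1"
  shows "FT \<gamma> T \<in> Hv \<gamma> \<and> normv \<gamma> (FT \<gamma> T) \<le> 1"
proof (rule HvI)
  have nz: "1 - complex_of_real T * z \<noteq> 0" if "z \<in> ball 0 1" for z
  proof
    assume "1 - complex_of_real T * z = 0"
    then have "norm (complex_of_real T * z) = 1" by (metis norm_one right_minus_eq)
    moreover have "norm (complex_of_real T * z) \<le> 1 * norm z" using T
      by (simp add: norm_mult mult_left_le_one_le)
    ultimately show False using that by simp
  qed
  show "FT \<gamma> T holomorphic_on ball 0 1"
    unfolding FT_def[abs_def] using nz by (intro holomorphic_intros) auto
  fix z :: complex assume z: "z \<in> ball 0 1"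
  have z1: "norm z < 1" using z by simp
  define m where "m = 1 - T * norm z"
  have m1: "1 - norm z \<le> m" unfolding m_def using T z1 by (simp add: mult_left_le_one_le)
  have m2: "1 - T \<le> m" unfolding m_def using T z1 by (simp add: mult_right_le_one_le)
  have mn: "m \<le> norm (1 - complex_of_real T * z)"
  proof -
    have "norm (complex_of_real T * z) = T * norm z" using T by (simp add: norm_mult)
    then show ?thesis unfolding m_def by (metis norm_one norm_triangle_ineq2)
  qed
  have "(1 - norm z) powr \<gamma> * (1-T) powr (1-\<gamma>) \<le> m"
    using m1 m2 z1 T g by (intro powr_interp) auto
  also have "\<dots> \<le> norm (1 - complex_of_real T * z)" by (rule mn)
  finally have le: "(1 - norm z) powr \<gamma> * (1-T) powr (1-\<gamma>) \<le> norm (1 - complex_of_real T * z)" .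
  have pos: "0 < norm (1 - complex_of_real T * z)" using nz[OF z] by simp
  have "(1 - norm z) powr \<gamma> * norm (FT \<gamma> T z) = (1 - norm z) powr \<gamma> * (1-T) powr (1-\<gamma>) / norm (1 - complex_of_real T * z)"
    by (simp add: FT_def norm_divide)
  also have "\<dots> \<le> 1" using le pos by (simp add: divide_le_eq_1)
  finally show "(1 - norm z) powr \<gamma> * norm (FT \<gamma> T z) \<le> 1" .
qed

context
  fixes \<mu> :: "real measure" and C :: real
  assumes sets_mu: "sets \<mu> = sets (restrict_space borel {0..<1})"
  and fin: "finite_measure \<mu>"
  and Cpos: "C > 0"
  and Cb: "\<And>s. s < 1 \<Longrightarrow> measure \<mu> {t\<in>space \<mu>. s \<le> t} \<le> C*(1-s)"
begin

lemma LB: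
  assumes g: "0 < \<gamma>" "\<gamma> < 1" and T: "0 \<le> T" "T < 1" and c: "c > 0"
    and m: "c * (1-T) < measure \<mu> {T..<1}"
  shows "c / 4 \<le> (1-T) powr \<gamma> * norm (Imu \<mu> (FT \<gamma> T) (complex_of_real T))"
proof -
  interpret finite_measure \<mu> by (rule fin)
  have sp: "space \<mu> = {0..<1}" by (rule space_mu''[OF sets_mu fin])
  define a where "a = (1-T) powr (1-\<gamma>)"
  have a0: "0 < a" using T by (simp add: a_def)
  define h where "h t = a / (1 - T*t) / (1 - t*T)" for t
  have Tt: "1 - T \<le> 1 - T*t" if "0 \<le> t" "t < 1" for t
    using that T by (simp add: mult_right_le_one_le)
  have hm: "h \<in> borel_measurable \<mu>"
  proof (rule meas_cont''[OF sets_mu fin])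
    have "1 - T*t \<noteq> 0" "1 - t*T \<noteq> 0" if "t \<in> {0..<1}" for t
      using Tt[of t] that T by (auto simp: mult.commute)
    then show "continuous_on {0..<1} h" unfolding h_def[abs_def]
      by (intro continuous_intros) auto
  qed
  have hb: "norm (h t) \<le> a / (1-T) / (1-T)" if "t \<in> space \<mu>" for t
  proof -
    have t: "0 \<le> t" "t < 1" using that sp by auto
    have e: "h t = a / (1 - T*t) / (1 - T*t)" by (simp add: h_def mult.commute)
    have p: "0 < 1 - T*t" using Tt[OF t] T by simp
    have "a / (1 - T*t) / (1 - T*t) \<le> a / (1-T) / (1 - T*t)"
      using Tt[OF t] T a0 p by (intro divide_right_mono divide_left_mono) auto
    also have "\<dots> \<le> a / (1-T) / (1-T)"
      using Tt[OF t] T a0 p by (intro divide_left_mono) auto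
    finally have "h t \<le> a / (1-T) / (1-T)" "0 \<le> h t" using e p a0 by auto
    then show ?thesis by simp
  qed
  have hi: "integrable \<mu> h"
    by (rule integrable_const_bound[where B = "a / (1-T) / (1-T)"]) (use hb hm in auto)
  define L where "L = a / (2*(1-T)) / (2*(1-T))"
  have L0: "0 < L" using a0 T by (simp add: L_def)
  have Tsets: "{T..<1} \<in> sets \<mu>"
  proof -
    have "(\<lambda>t::real. t) \<in> borel_measurable \<mu>"
      by (rule meas_cont''[OF sets_mu fin]) (intro continuous_intros)
    then have "{t\<in>space \<mu>. T \<le> t} \<in> sets \<mu>" by measurable
    moreover have "{t\<in>space \<mu>. T \<le> t} = {T..<1}" using sp T by auto
    ultimately show ?thesis by simp
  qed
  have hl: "L * indicator {T..<1} t \<le> h t" if "t \<in> space \<mu>" for t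
  proof (cases "T \<le> t")
    case True
    have t: "0 \<le> t" "t < 1" using that sp by auto
    have "1 - T*t \<le> 1 - T*T" using True T by (simp add: mult_left_mono)
    also have "\<dots> \<le> 2*(1-T)" using T zero_le_square[of "1-T"] by (simp add: algebra_simps)
    finally have u: "1 - T*t \<le> 2*(1-T)" .
    have p: "0 < 1 - T*t" using Tt[OF t] T by simp
    have "L = a / (2*(1-T)) / (2*(1-T))" by (simp add: L_def)
    also have "\<dots> \<le> a / (1 - T*t) / (2*(1-T))" using u p a0 T
      by (intro divide_right_mono divide_left_mono) auto
    also have "\<dots> \<le> a / (1 - T*t) / (1 - T*t)" using u p a0 T
      by (intro divide_left_mono) auto
    also have "\<dots> = h t" by (simp add: h_def mult.commute)
    finally show ?thesis using True t by simp
  next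
    case False
    have t: "0 \<le> t" "t < 1" using that sp by auto
    have "0 \<le> h t" using Tt[OF t] T a0 by (simp add: h_def mult.commute)
    then show ?thesis using False by simp
  qed
  have eqI: "Imu \<mu> (FT \<gamma> T) (complex_of_real T) = complex_of_real (integral\<^sup>L \<mu> h)"
    unfolding Imu_def FT_def h_def a_def integral_complex_of_real[symmetric]
    by (rule Bochner_Integration.integral_cong[OF refl]) simp
  have "L * measure \<mu> {T..<1} = (\<integral>t. L * indicator {T..<1} t \<partial>\<mu>)"
    using Tsets by (simp add: Int_absorb2 sets.sets_into_space)
  also have "\<dots> \<le> integral\<^sup>L \<mu> h"
  proof (rule integral_mono[OF _ hi])
    show "integrable \<mu> (\<lambda>t. L * indicator {T..<1} t)"
      using Tsets by (intro integrable_mult_right integrable_real_indicator) (auto simp: emeasure_eq_measure top.not_eq_extremum)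
  qed (rule hl)
  finally have I1: "L * measure \<mu> {T..<1} \<le> integral\<^sup>L \<mu> h" .
  have "L * (c * (1-T)) \<le> L * measure \<mu> {T..<1}" using m L0 by simp
  also note I1
  also have "integral\<^sup>L \<mu> h \<le> norm (Imu \<mu> (FT \<gamma> T) (complex_of_real T))" unfolding eqI by simp
  finally have I2: "L * (c * (1-T)) \<le> norm (Imu \<mu> (FT \<gamma> T) (complex_of_real T))" .
  have "(1-T) powr \<gamma> * (L * (c * (1-T))) = c / 4 * ((1-T) powr \<gamma> * a / (1-T))"
    unfolding L_def by (rule LB_alg) (use T in simp)
  also have "(1-T) powr \<gamma> * a / (1-T) = 1"
    using T by (simp add: a_def powr_diff field_simps)
  finally have "c / 4 = (1-T) powr \<gamma> * (L * (c * (1-T)))" by simp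
  also have "\<dots> \<le> (1-T) powr \<gamma> * norm (Imu \<mu> (FT \<gamma> T) (complex_of_real T))"
    using I2 by (intro mult_left_mono) auto
  finally show ?thesis .
qed

lemma pt_zero:
  assumes g: "0 < \<gamma>" "\<gamma> < 1" and T: "\<And>n. 0 \<le> T n" "\<And>n. T n < 1"
    and Tl: "(\<lambda>n. 1 - T n) \<longlonglongrightarrow> 0" and z: "z \<in> ball 0 1"
  shows "(\<lambda>n. Imu \<mu> (FT \<gamma> (T n)) z) \<longlonglongrightarrow> 0"
proof -
  have sp: "space \<mu> = {0..<1}" by (rule space_mu''[OF sets_mu fin])
  define g' where "g' = (1 + \<gamma>) / 2"
  have g': "0 < g'" "g' < 1" "\<gamma> < g'" using g by (auto simp: g'_def)
  define P where "P t = (1-t) powr (-g')" for t :: real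
  have Pi: "integrable \<mu> P"
    using main_est[OF sets_mu fin Cpos Cb g'(1) g'(2), of 0] by (simp add: P_def[abs_def])
  define K' where "K' = integral\<^sup>L \<mu> P"
  have z1: "norm z < 1" using z by simp
  have bound: "norm (Imu \<mu> (FT \<gamma> (T n)) z) \<le> (1 - T n) powr (g' - \<gamma>) * K' / (1 - norm z)" for n
  proof -
    define S where "S = T n"
    have S: "0 \<le> S" "S < 1" using T by (auto simp: S_def)
    have FH: "FT \<gamma> S \<in> Hv \<gamma>" using FT_Hv[OF g S] by blast
    have ii: "integrable \<mu> (\<lambda>t. FT \<gamma> S (complex_of_real t) / (1 - complex_of_real t * z))"
      using W1[OF sets_mu fin Cpos Cb g FH z] by blast
    have pw: "norm (FT \<gamma> S (complex_of_real t) / (1 - complex_of_real t * z))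
              \<le> (1 - S) powr (g' - \<gamma>) / (1 - norm z) * P t" if t: "t \<in> space \<mu>" for t
    proof -
      have t01: "0 \<le> t" "t < 1" using t sp by auto
      note nt = norm_1_tz[OF sets_mu fin t01 z1]
      have tz: "1 - norm z \<le> 1 - t * norm z" using t01 z1 by (simp add: mult_left_le_one_le)
      have zpos: "0 < 1 - norm z" using z1 by simp
      define m where "m = 1 - S * t"
      have m1: "1 - t \<le> m" unfolding m_def using S t01 by (simp add: mult_left_le_one_le)
      have m2: "1 - S \<le> m" unfolding m_def using S t01 by (simp add: mult_right_le_one_le)
      have mpos: "0 < m" using m2 S by simp
      have ip: "(1 - t) powr g' * (1 - S) powr (1 - g') \<le> m"
        using m1 m2 t01 S g' by (intro powr_interp) auto
      have nF: "norm (FT \<gamma> S (complex_of_real t)) = (1 - S) powr (1 - \<gamma>) / m"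
      proof -
        have "1 - complex_of_real S * complex_of_real t = complex_of_real m" by (simp add: m_def)
        then show ?thesis using mpos by (simp add: FT_def norm_divide)
      qed
      have "norm (FT \<gamma> S (complex_of_real t) / (1 - complex_of_real t * z))
            = (1 - S) powr (1 - \<gamma>) / m / norm (1 - complex_of_real t * z)" by (simp add: norm_divide nF)
      also have "\<dots> \<le> (1 - S) powr (1 - \<gamma>) / m / (1 - norm z)"
      proof -
        have np: "0 < norm (1 - complex_of_real t * z)" using nt tz zpos by linarith
        show ?thesis using nt tz zpos mpos np by (intro divide_left_mono) auto
      qed
      finally have A: "norm (FT \<gamma> S (complex_of_real t) / (1 - complex_of_real t * z)) \<le> (1 - S) powr (1 - \<gamma>) / m / (1 - norm z)" .
      have "(1 - S) powr (1 - \<gamma>) / m \<le> (1 - S) powr (1 - \<gamma>) / ((1 - t) powr g' * (1 - S) powr (1 - g'))"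
        using ip t01 S mpos by (intro divide_left_mono mult_pos_pos) auto
      also have "(1 - S) powr (1 - \<gamma>) / ((1 - t) powr g' * (1 - S) powr (1 - g')) = (1 - S) powr (g' - \<gamma>) * P t"
        using t01 S by (simp add: P_def powr_minus_divide powr_diff field_simps powr_add[symmetric])
      finally have B: "(1 - S) powr (1 - \<gamma>) / m \<le> (1 - S) powr (g' - \<gamma>) * P t" .
      have "(1 - S) powr (1 - \<gamma>) / m / (1 - norm z) \<le> (1 - S) powr (g' - \<gamma>) * P t / (1 - norm z)"
        using B zpos by (intro divide_right_mono) auto
      with A show ?thesis by simp
    qed
    have "norm (Imu \<mu> (FT \<gamma> S) z) \<le> (\<integral>t. norm (FT \<gamma> S (complex_of_real t) / (1 - complex_of_real t * z)) \<partial>\<mu>)"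
      unfolding Imu_def by (rule integral_norm_bound)
    also have "\<dots> \<le> (\<integral>t. (1 - S) powr (g' - \<gamma>) / (1 - norm z) * P t \<partial>\<mu>)"
      using ii Pi pw by (intro integral_mono) auto
    also have "\<dots> = (1 - S) powr (g' - \<gamma>) * K' / (1 - norm z)" by (simp add: K'_def)
    finally show ?thesis by (simp add: S_def)
  qed
  have "(\<lambda>n. (1 - T n) powr (g' - \<gamma>)) \<longlonglongrightarrow> 0"
  proof (rule tendsto_zero_powrI[OF Tl tendsto_const])
    show "\<forall>\<^sub>F n in sequentially. 0 \<le> 1 - T n" using T by (intro always_eventually) (auto intro: less_imp_le)
  qed (use g' in auto)
  then have "(\<lambda>n. (1 - T n) powr (g' - \<gamma>) * K' / (1 - norm z)) \<longlonglongrightarrow> 0"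
    by (intro tendsto_divide_zero tendsto_mult_left_zero)
  then show ?thesis
    by (rule Lim_null_comparison[rotated]) (use bound in auto)
qed

end

lemma noncompact:
  fixes \<mu> :: "real measure" and C :: real
  assumes sets_mu: "sets \<mu> = sets (restrict_space borel {0..<1})"
  and fin: "finite_measure \<mu>"
  and Cpos: "C > 0"
  and Cb: "\<And>s. s < 1 \<Longrightarrow> measure \<mu> {t\<in>space \<mu>. s \<le> t} \<le> C*(1-s)"
  and g: "0 < \<gamma>" "\<gamma> < 1" and nv: "\<not> vanishing_carleson \<mu>"
  shows "\<not> Imu_compact \<mu> \<gamma>"
proof
  assume comp: "Imu_compact \<mu> \<gamma>"
  have "\<not> (\<forall>c>0. eventually (\<lambda>t. norm (measure \<mu> {t..<1}) \<le> c * norm (1-t)) (at_left (1::real)))"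
    using nv unfolding vanishing_carleson_def by (metis landau_o.smallI)
  then obtain c where c: "c > 0" and ne: "\<not> eventually (\<lambda>t. norm (measure \<mu> {t..<1}) \<le> c * norm (1-t)) (at_left (1::real))"
    by blast
  have "\<forall>n. \<exists>t. 1 - inverse (real (Suc n)) < t \<and> t < 1 \<and> c * (1-t) < measure \<mu> {t..<1}"
  proof
    fix n
    show "\<exists>t. 1 - inverse (real (Suc n)) < t \<and> t < 1 \<and> c * (1-t) < measure \<mu> {t..<1}"
    proof (rule ccontr)
      assume "\<not> ?thesis"
      then have h: "\<And>t. 1 - inverse (real (Suc n)) < t \<Longrightarrow> t < 1 \<Longrightarrow> measure \<mu> {t..<1} \<le> c * (1-t)"
        using not_less by blast
      have "eventually (\<lambda>t. norm (measure \<mu> {t..<1}) \<le> c * norm (1-t)) (at_left (1::real))"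
        unfolding eventually_at_left_field
      proof (intro exI[of _ "1 - inverse (real (Suc n))"] conjI allI impI)
        show "1 - inverse (real (Suc n)) < 1" by simp
        fix y assume y: "1 - inverse (real (Suc n)) < y" "y < 1"
        have "measure \<mu> {y..<1} \<le> c * (1-y)" by (rule h[OF y])
        then show "norm (measure \<mu> {y..<1}) \<le> c * norm (1-y)" using y by simp
      qed
      with ne show False by blast
    qed
  qed
  then obtain T where T: "\<And>n. 1 - inverse (real (Suc n)) < T n" "\<And>n. T n < 1"
      "\<And>n. c * (1 - T n) < measure \<mu> {T n..<1}"
    by metis
  have T0: "0 \<le> T n" for n
  proof -
    have "inverse (real (Suc n)) \<le> 1" by (simp add: inverse_le_1_iff)
    then show ?thesis using T(1)[of n] by linarith
  qed
  have Tl: "(\<lambda>n. 1 - T n) \<longlonglongrightarrow> 0"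
  proof (rule Lim_null_comparison[OF _ LIMSEQ_inverse_real_of_nat])
    show "\<forall>\<^sub>F n in sequentially. norm (1 - T n) \<le> inverse (real (Suc n))"
    proof (intro always_eventually allI)
      fix n
      have "1 - T n \<le> inverse (real (Suc n))" using T(1)[of n] by linarith
      moreover have "0 \<le> 1 - T n" using T(2)[of n] by linarith
      ultimately show "norm (1 - T n) \<le> inverse (real (Suc n))" by simp
    qed
  qed
  define Fs where "Fs n = FT \<gamma> (T n)" for n
  have FH: "Fs n \<in> Hv \<gamma>" "normv \<gamma> (Fs n) \<le> 1" for n
    using FT_Hv[OF g T0 T(2)] by (auto simp: Fs_def)
  obtain r g0 where r: "strict_mono r" and g0H: "g0 \<in> Hv \<gamma>"
    and lim: "(\<lambda>n. normv \<gamma> (\<lambda>z. Imu \<mu> (Fs (r n)) z - g0 z)) \<longlonglongrightarrow> 0"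
    using comp FH unfolding Imu_compact_def by blast
  have IH: "Imu \<mu> (Fs m) \<in> Hv \<gamma>" for m
    using Imu_Hv(1)[OF sets_mu fin Cpos Cb g FH(1)] by blast
  have DH: "(\<lambda>z. Imu \<mu> (Fs (r n)) z - g0 z) \<in> Hv \<gamma>" for n
    by (rule Hv_diff[OF g0H IH])
  have g0z: "g0 z = 0" if z: "z \<in> ball 0 1" for z
  proof -
    have "(\<lambda>n. normv \<gamma> (\<lambda>z. Imu \<mu> (Fs (r n)) z - g0 z) * (1 - norm z) powr (-\<gamma>)) \<longlonglongrightarrow> 0"
      using lim by (rule tendsto_mult_left_zero)
    then have "(\<lambda>n. Imu \<mu> (Fs (r n)) z - g0 z) \<longlonglongrightarrow> 0"
      by (rule Lim_null_comparison[rotated]) (use Hv_pt[OF DH z] in auto)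
    then have l1: "(\<lambda>n. Imu \<mu> (Fs (r n)) z) \<longlonglongrightarrow> g0 z" by (rule LIM_zero_cancel)
    have "(\<lambda>n. Imu \<mu> (Fs n) z) \<longlonglongrightarrow> 0"
      unfolding Fs_def by (rule pt_zero[OF sets_mu fin Cpos Cb g T0 T(2) Tl z])
    from LIMSEQ_subseq_LIMSEQ[OF this r] have l2: "(\<lambda>n. Imu \<mu> (Fs (r n)) z) \<longlonglongrightarrow> 0"
      by (simp add: comp_def)
    show ?thesis using LIMSEQ_unique[OF l1 l2] .
  qed
  have low: "c / 4 \<le> normv \<gamma> (\<lambda>z. Imu \<mu> (Fs (r n)) z - g0 z)" for n
  proof -
    define m where "m = r n"
    have eq: "normv \<gamma> (\<lambda>z. Imu \<mu> (Fs m) z - g0 z) = normv \<gamma> (Imu \<mu> (Fs m))"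
      unfolding normv_def by (rule SUP_cong) (auto simp: g0z)
    have zin: "complex_of_real (T m) \<in> ball 0 1" using T0[of m] T(2)[of m] by simp
    have "c / 4 \<le> (1 - T m) powr \<gamma> * norm (Imu \<mu> (Fs m) (complex_of_real (T m)))"
      unfolding Fs_def by (rule LB[OF sets_mu fin Cpos Cb g T0 T(2) c T(3)])
    also have "\<dots> \<le> normv \<gamma> (Imu \<mu> (Fs m))"
      using Hv_le[OF IH zin] T0[of m] by simp
    finally show ?thesis using eq by (simp add: m_def)
  qed
  have "eventually (\<lambda>n. normv \<gamma> (\<lambda>z. Imu \<mu> (Fs (r n)) z - g0 z) < c / 4) sequentially"
    using lim c by (intro order_tendstoD(2)) auto
  then obtain n where "normv \<gamma> (\<lambda>z. Imu \<mu> (Fs (r n)) z - g0 z) < c / 4"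
    by (auto simp: eventually_sequentially)
  with low[of n] show False by linarith
qed

theorem corollary19:
  fixes \<mu> :: "real measure" and \<gamma> :: real
  assumes "sets \<mu> = sets (restrict_space borel {0..<1})"
    and "finite_measure \<mu>"
    and "carleson \<mu>" and "\<not> vanishing_carleson \<mu>"
    and "\<gamma> > 0"
  shows "(Imu_continuous \<mu> \<gamma> \<longleftrightarrow> \<gamma> < 1) \<and> (\<gamma> < 1 \<longrightarrow> \<not> Imu_compact \<mu> \<gamma>)"
proof -
  obtain C where Cpos: "C > 0" and Cb0: "\<forall>s<1. measure \<mu> {t\<in>space \<mu>. s \<le> t} \<le> C*(1-s)"
    using carleson_bound[OF assms(1,2,3)] by blast
  have Cb: "\<And>s. s < 1 \<Longrightarrow> measure \<mu> {t\<in>space \<mu>. s \<le> t} \<le> C*(1-s)" using Cb0 by blast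
  have 1: "Imu_continuous \<mu> \<gamma> \<longleftrightarrow> \<gamma> < 1"
  proof
    assume ic: "Imu_continuous \<mu> \<gamma>"
    show "\<gamma> < 1"
    proof (rule ccontr)
      assume "\<not> \<gamma> < 1"
      then have "\<not> Imu_well_defined \<mu> \<gamma>" using not_wd[OF assms(1,2,4)] by simp
      with ic show False unfolding Imu_continuous_def by blast
    qed
  next
    assume "\<gamma> < 1"
    then show "Imu_continuous \<mu> \<gamma>" using cont[OF assms(1,2) Cpos Cb assms(5)] by blast
  qed
  have 2: "\<gamma> < 1 \<longrightarrow> \<not> Imu_compact \<mu> \<gamma>"
    using noncompact[OF assms(1,2) Cpos Cb assms(5) _ assms(4)] by blast
  from 1 2 show ?thesis by blast
qed


end
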